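(* Let $p$ be a prime and let $B(z)=B_0+zB_1+z^2B_2$ be a $2\times2$ matrix polynomial of degree $2$ in $z$, with $B_0,B_1,B_2$ $2\times 2$ matrices with entries in a commutative ring of characteristic $p$. Then $$\operatorname{Tr}[B(z+p-1)B(z+p-2)\cdots B(z+1)B(z)]=(z^p-z)^2\operatorname{Tr}B_2^p-(z^p-z)\operatorname{Tr}(B_2^{p-1}B_1)+(z^p-z)\operatorname{Tr}B_1^p+\operatorname{Tr}[B(p-1)B(p-2)\cdots B(1)B(0)].$$ *)

theory Defs
  imports "HOL-Analysis.Analysis" "HOL-Computational_Algebra.Polynomial"
begin

primrec matpow :: "'a::semiring_1^'n^'n \<Rightarrow> nat \<Rightarrow> 'a^'n^'n" where
  "matpow A 0 = mat 1"
| "matpow A (Suc n) = A ** matpow A n"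

primrec matprod_down :: "(nat \<Rightarrow> 'a::semiring_1^'n^'n) \<Rightarrow> nat \<Rightarrow> 'a^'n^'n" where
  "matprod_down f 0 = mat 1"
| "matprod_down f (Suc n) = f n ** matprod_down f n"

text \<open>The matrix polynomial B(s) = B0 + s B1 + s^2 B2, evaluated at a polynomial s
  in the indeterminate z, giving a matrix over 'a poly.\<close>
definition Bpoly :: "'a::comm_ring_1^'n^'n \<Rightarrow> 'a^'n^'n \<Rightarrow> 'a^'n^'n \<Rightarrow> 'a poly \<Rightarrow> 'a poly^'n^'n" where
  "Bpoly B0 B1 B2 s = (\<chi> i j. [:B0$i$j:] + s * [:B1$i$j:] + s^2 * [:B2$i$j:])"

definition Bval :: "'a::comm_ring_1^'n^'n \<Rightarrow> 'a^'n^'n \<Rightarrow> 'a^'n^'n \<Rightarrow> 'a \<Rightarrow> 'a^'n^'n" where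
  "Bval B0 B1 B2 c = (\<chi> i j. B0$i$j + c * B1$i$j + c^2 * B2$i$j)"

end

theory Submission
  imports Defs "HOL-Number_Theory.Cong"
begin


lemma of_nat_mod_CHAR:
  assumes "CHAR('a::comm_ring_1) = p"
  shows "(of_nat (n mod p) :: 'a) = of_nat n"
  using assms by (simp add: of_nat_eq_iff_cong_CHAR cong_def)

lemma of_nat_unit_CHAR:
  assumes "prime p" "CHAR('a::comm_ring_1) = p" "\<not> p dvd n"
  shows "\<exists>u::'a. of_nat n * u = 1"
proof -
  have "coprime n p" using assms(1,3) prime_imp_coprime coprime_commute by metis
  then obtain x where "[n * x = Suc 0] (mod p)" using cong_solve_coprime_nat by blast
  hence "(of_nat (n*x) :: 'a) = of_nat (Suc 0)" by (subst of_nat_eq_iff_cong_CHAR) (simp add: assms(2))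
  thus ?thesis by (metis of_nat_mult of_nat_1 One_nat_def)
qed

lemma of_nat_mult_eq0_CHAR:
  assumes "prime p" "CHAR('a::comm_ring_1) = p" "\<not> p dvd n" "of_nat n * (x::'a) = 0"
  shows "x = 0"
proof -
  obtain u :: 'a where u: "of_nat n * u = 1" using of_nat_unit_CHAR[OF assms(1-3)] by blast
  have "x = (of_nat n * u) * x" using u by simp
  also have "\<dots> = u * (of_nat n * x)" by (simp add: ac_simps)
  finally show ?thesis using assms(4) by simp
qed

lemma freshman_CHAR:
  assumes "prime p" "CHAR('a::comm_ring_1) = p"
  shows "((x::'a) + y) ^ p = x ^ p + y ^ p"
proof -
  have p0: "p > 0" using assms(1) prime_gt_0_nat by blast
  have "(x + y) ^ p = (\<Sum>k\<le>p. of_nat (p choose k) * x ^ k * y ^ (p - k))"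
    by (rule binomial_ring)
  also have "\<dots> = (\<Sum>k\<in>{0,p}. of_nat (p choose k) * x ^ k * y ^ (p - k))"
  proof (rule sum.mono_neutral_right)
    show "\<forall>i\<in>{..p} - {0, p}. of_nat (p choose i) * x ^ i * y ^ (p - i) = 0"
    proof
      fix i assume i: "i \<in> {..p} - {0, p}"
      have "p dvd (p choose i)" using i assms(1) p0 by (intro dvd_choose_prime) auto
      hence "(of_nat (p choose i) :: 'a) = 0" using assms(2) by (simp add: of_nat_eq_0_iff_char_dvd)
      thus "of_nat (p choose i) * x ^ i * y ^ (p - i) = 0" by simp
    qed
  qed auto
  also have "\<dots> = x ^ p + y ^ p" using p0 by simp
  finally show ?thesis .
qed

lemma coeff_lin_pow:
  "coeff ([:a, 1:] ^ i) n = of_nat (i choose n) * (a::'a::comm_ring_1) ^ (i - n)"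
proof (cases "n \<le> i")
  case True thus ?thesis using coeff_linear_poly_power[OF True, of a 1] by simp
next
  case False
  have "degree ([:a, 1:] ^ i) \<le> i"
    by (rule order.trans[OF degree_power_le]) simp
  hence "coeff ([:a, 1:] ^ i) n = 0" using False by (intro coeff_eq_0) simp
  thus ?thesis using False by (simp add: binomial_eq_0)
qed

lemma pcompose_as_sum:
  "pcompose g q = (\<Sum>i\<le>degree g. smult (coeff g i) (q ^ i))"
proof -
  have "pcompose g q = poly (map_poly (\<lambda>x. [:x:]) g) q" by (rule pcompose_altdef)
  also have "\<dots> = (\<Sum>i\<le>degree (map_poly (\<lambda>x. [:x:]) g). coeff (map_poly (\<lambda>x. [:x:]) g) i * q ^ i)"
    by (rule poly_altdef)
  also have "\<dots> = (\<Sum>i\<le>degree g. smult (coeff g i) (q ^ i))"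
    by (simp add: coeff_map_poly degree_map_poly)
  finally show ?thesis .
qed

lemma pcompose_power: "pcompose (g ^ n) q = (pcompose g q) ^ n"
  by (induction n) (simp_all add: pcompose_1 pcompose_mult)

lemma coeff_shift_pred:
  fixes g :: "'a::comm_ring_1 poly"
  assumes "degree g = Suc m"
  shows "coeff (pcompose g [:1,1:]) m = coeff g m + of_nat (Suc m) * coeff g (Suc m)"
proof -
  have "coeff (pcompose g [:1,1:]) m = (\<Sum>i\<le>Suc m. coeff g i * of_nat (i choose m))"
    by (simp only: pcompose_as_sum assms coeff_sum coeff_smult coeff_lin_pow power_one mult_1_right)
  also have "\<dots> = (\<Sum>i\<in>{m, Suc m}. coeff g i * of_nat (i choose m))"
    by (rule sum.mono_neutral_right) (auto simp: binomial_eq_0 le_Suc_eq)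
  also have "\<dots> = coeff g m + of_nat (Suc m) * coeff g (Suc m)"
    by (simp add: ac_simps)
  finally show ?thesis .
qed

lemma shift_inv_dvd_degree:
  fixes g :: "'a::comm_ring_1 poly"
  assumes "prime p" "CHAR('a) = p" "pcompose g [:1,1:] = g" "degree g > 0"
  shows "p dvd degree g"
proof (rule ccontr)
  assume nd: "\<not> p dvd degree g"
  obtain m where m: "degree g = Suc m" using assms(4) gr0_implies_Suc by blast
  have "of_nat (Suc m) * coeff g (Suc m) = 0"
    using coeff_shift_pred[OF m] assms(3) by simp
  hence "coeff g (Suc m) = 0" using of_nat_mult_eq0_CHAR[OF assms(1,2)] nd m by metis
  hence "lead_coeff g = 0" using m by simp
  thus False using assms(4) by simp
qed

definition wpoly :: "nat \<Rightarrow> 'a::comm_ring_1 poly" where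
  "wpoly p = [:0,1:] ^ p - [:0,1:]"

lemma wpoly_inv:
  assumes "prime p" "CHAR('a::comm_ring_1) = p"
  shows "pcompose (wpoly p :: 'a poly) [:1,1:] = wpoly p"
proof -
  have c: "CHAR('a poly) = p" using assms(2) by simp
  have "pcompose (wpoly p :: 'a poly) [:1,1:] = [:1,1:] ^ p - [:1,1:]"
    by (simp add: wpoly_def pcompose_diff pcompose_power pcompose_pCons)
  also have eq: "[:1,1:] = [:0,1:] + (1 :: 'a poly)" by (simp add: one_pCons)
  hence "[:1,1:] ^ p - [:1,1:] = ([:0,1:] + (1 :: 'a poly)) ^ p - ([:0,1:] + 1)" by simp
  also have "([:0,1:] + (1 :: 'a poly)) ^ p = [:0,1:] ^ p + 1"
    using freshman_CHAR[OF assms(1) c] by simp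
  finally show ?thesis by (simp add: wpoly_def)
qed

lemma wpoly_coeff_p: 
  assumes "prime p" shows "coeff (wpoly p :: 'a::comm_ring_1 poly) p = 1"
proof -
  have "p \<noteq> 1" using assms by auto
  moreover have "\<And>n. [:0,1:] ^ n = (monom 1 n :: 'a poly)" by (simp add: monom_altdef)
  moreover have "coeff [:0,1::'a:] p = 0" using \<open>p \<noteq> 1\<close>
    by (cases p) (auto simp: coeff_pCons split: nat.split)
  ultimately show ?thesis by (simp add: wpoly_def coeff_diff coeff_monom)
qed

lemma wpoly_degree:
  assumes "prime p" shows "degree (wpoly p :: 'a::comm_ring_1 poly) \<le> p"
proof -
  have "p \<ge> 1" using assms prime_ge_1_nat by blast
  thus ?thesis unfolding wpoly_def
    by (intro degree_diff_le) (auto intro: order.trans[OF degree_power_le])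
qed

lemma wpoly_0: 
  assumes "prime p" shows "poly (wpoly p :: 'a::comm_ring_1 poly) 0 = 0"
  using prime_gt_0_nat[OF assms] by (simp add: wpoly_def power_0_left)

lemma shift_inv_form:
  fixes g :: "'a::comm_ring_1 poly"
  assumes "prime p" "CHAR('a) = p" "pcompose g [:1,1:] = g" "degree g < 2 * p"
  shows "g = smult (coeff g p) (wpoly p) + [:poly g 0:]"
proof (cases "degree g = 0")
  case True
  then obtain c where g: "g = [:c:]" by (metis degree_eq_zeroE)
  have "coeff g p = 0" using g assms(1) prime_gt_0_nat by (auto simp: coeff_pCons split: nat.splits)
  thus ?thesis using g by simp
next
  case False
  have "p dvd degree g" using shift_inv_dvd_degree[OF assms(1-3)] False by simp
  then obtain k where k: "degree g = p * k" by blast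
  have "p * k < p * 2" using k assms(4) by (simp add: mult.commute)
  hence "k < 2" by (metis mult_less_cancel1)
  moreover have "k \<noteq> 0" using k False by auto
  ultimately have "k = 1" by arith
  hence dg: "degree g = p" using k by simp
  define h where "h = g - smult (coeff g p) (wpoly p)"
  have hinv: "pcompose h [:1,1:] = h"
    using assms(3) wpoly_inv[OF assms(1,2)] by (simp add: h_def pcompose_diff pcompose_smult)
  have "degree h \<le> p" unfolding h_def using dg wpoly_degree[OF assms(1), where 'a='a]
    by (intro degree_diff_le) (auto intro: order.trans[OF degree_smult_le])
  moreover have "coeff h p = 0" using wpoly_coeff_p[OF assms(1), where 'a='a] by (simp add: h_def)
  ultimately have hp: "degree h < p"
    by (metis antisym_conv2 assms(1) leading_coeff_0_iff degree_0 prime_gt_0_nat)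
  have "degree h = 0"
  proof (rule ccontr)
    assume "degree h \<noteq> 0"
    hence "p dvd degree h" using shift_inv_dvd_degree[OF assms(1,2) hinv] by simp
    thus False using hp \<open>degree h \<noteq> 0\<close> by (meson dvd_imp_le linorder_not_le neq0_conv)
  qed
  then obtain c where hc: "h = [:c:]" by (metis degree_eq_zeroE)
  have "c = poly h 0" using hc by simp
  also have "\<dots> = poly g 0" using wpoly_0[OF assms(1), where 'a='a] by (simp add: h_def)
  finally have "c = poly g 0" .
  show ?thesis using hc \<open>c = poly g 0\<close> unfolding h_def by (metis diff_add_cancel add.commute)
qed



lemma of_nat_p_CHAR: "CHAR('a::comm_ring_1) = p \<Longrightarrow> (of_nat p :: 'a) = 0"
  by (metis of_nat_CHAR)

lemma fermat_CHAR:
  assumes "prime p" "CHAR('a::comm_ring_1) = p"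
  shows "(of_nat r :: 'a) ^ p = of_nat r"
proof (induction r)
  case 0 thus ?case using prime_gt_0_nat[OF assms(1)] by (simp add: power_0_left)
next
  case (Suc r)
  have "(of_nat (Suc r) :: 'a) ^ p = (of_nat r + 1) ^ p" by (simp add: add.commute)
  also have "\<dots> = of_nat r ^ p + 1 ^ p" by (rule freshman_CHAR[OF assms])
  finally show ?case using Suc by simp
qed

definition psum :: "nat \<Rightarrow> nat \<Rightarrow> 'a::comm_ring_1" where
  "psum p j = (\<Sum>r<p. (of_nat r :: 'a) ^ j)"

lemma psum_small:
  assumes "prime p" "CHAR('a::comm_ring_1) = p" "j + 1 < p"
  shows "(psum p j :: 'a) = 0"
  using assms(3)
proof (induction j rule: less_induct)
  case (less j)
  have tel: "(\<Sum>r<p. ((of_nat (Suc r) :: 'a) ^ (Suc j) - of_nat r ^ (Suc j))) = 0"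
    using of_nat_p_CHAR[OF assms(2)] by (subst sum_lessThan_telescope[where f = "\<lambda>r. (of_nat r :: 'a) ^ Suc j"]) simp
  have exp: "(of_nat (Suc r) :: 'a) ^ (Suc j) - of_nat r ^ (Suc j)
        = (\<Sum>i\<le>j. of_nat (Suc j choose i) * of_nat r ^ i)" for r
  proof -
    have "(of_nat (Suc r) :: 'a) ^ (Suc j) = (of_nat r + 1) ^ Suc j" by (simp add: add.commute)
    also have "\<dots> = (\<Sum>i\<le>Suc j. of_nat (Suc j choose i) * of_nat r ^ i * 1 ^ (Suc j - i))"
      by (rule binomial_ring)
    also have "\<dots> = (\<Sum>i\<le>j. of_nat (Suc j choose i) * of_nat r ^ i) + of_nat r ^ Suc j"
      by (simp add: sum.atMost_Suc)
    finally show ?thesis by simp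
  qed
  have "0 = (\<Sum>r<p. \<Sum>i\<le>j. of_nat (Suc j choose i) * (of_nat r :: 'a) ^ i)"
    using tel exp by simp
  also have "\<dots> = (\<Sum>i\<le>j. of_nat (Suc j choose i) * psum p i)"
    by (subst sum.swap) (simp add: psum_def sum_distrib_left)
  also have "\<dots> = (\<Sum>i\<in>{j}. of_nat (Suc j choose i) * psum p i)"
  proof (rule sum.mono_neutral_right)
    show "\<forall>i\<in>{..j} - {j}. of_nat (Suc j choose i) * (psum p i :: 'a) = 0"
    proof
      fix i assume i: "i \<in> {..j} - {j}"
      hence "i < j" by auto
      hence "(psum p i :: 'a) = 0" using less by auto
      thus "of_nat (Suc j choose i) * (psum p i :: 'a) = 0" by simp
    qed
  qed auto
  also have "\<dots> = of_nat (Suc j) * psum p j" by simp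
  finally have "of_nat (Suc j) * (psum p j :: 'a) = 0" by simp
  moreover have "\<not> p dvd Suc j" using less(2) by (simp add: nat_dvd_not_less)
  ultimately show ?case using of_nat_mult_eq0_CHAR[OF assms(1,2)] by blast
qed

lemma psum_top:
  assumes "prime p" "CHAR('a::comm_ring_1) = p"
  shows "(psum p (p - 1) :: 'a) = -1"
proof -
  have p2: "p \<ge> 2" using assms(1) prime_ge_2_nat by blast
  have one: "(of_nat r :: 'a) ^ (p - 1) = 1" if "0 < r" "r < p" for r
  proof -
    have "\<not> p dvd r" using that by (simp add: nat_dvd_not_less)
    have "of_nat r * ((of_nat r :: 'a) ^ (p - 1) - 1) = of_nat r ^ p - of_nat r"
      using p2 by (simp add: algebra_simps flip: power_Suc)
    also have "\<dots> = 0" using fermat_CHAR[OF assms] by simp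
    finally have "(of_nat r :: 'a) ^ (p - 1) - 1 = 0" using of_nat_mult_eq0_CHAR[OF assms \<open>\<not> p dvd r\<close>] by blast
    thus ?thesis by simp
  qed
  have "(psum p (p - 1) :: 'a) = (\<Sum>r<p. (of_nat r :: 'a) ^ (p - 1))" by (simp add: psum_def)
  also have "\<dots> = (\<Sum>r\<in>{..<p} - {0}. (of_nat r :: 'a) ^ (p - 1))"
    using p2 by (intro sum.mono_neutral_right) (auto simp: power_0_left)
  also have "\<dots> = (\<Sum>r\<in>{..<p} - {0}. (1::'a))"
    using one by (intro sum.cong) auto
  also have "\<dots> = of_nat (p - 1)" using p2 by simp
  also have "\<dots> = of_nat p - 1" using p2 by (simp add: of_nat_diff)
  also have "\<dots> = -1" using of_nat_p_CHAR[OF assms(2)] by simp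
  finally show ?thesis .
qed

lemma choose_top_CHAR:
  assumes "prime p" "CHAR('a::comm_ring_1) = p"
  shows "(of_nat ((2 * p - 1) choose p) :: 'a) = 1"
proof -
  have p2: "p \<ge> 2" using assms(1) prime_ge_2_nat by blast
  have c: "CHAR('a poly) = p" using assms(2) by simp
  have eq: "[:1,1:] = [:0,1:] + (1 :: 'a poly)" by (simp add: one_pCons)
  have mon: "[:0,1:] ^ p = (monom 1 p :: 'a poly)" by (simp add: monom_altdef)
  have e2: "2 * p - 1 = p + (p - 1)" using p2 by simp
  have "[:1,1::'a:] ^ (2 * p - 1) = [:1,1:] ^ p * [:1,1:] ^ (p - 1)"
    unfolding e2 by (simp only: power_add)
  also have "[:1,1::'a:] ^ p = [:0,1:] ^ p + 1"
    unfolding eq using freshman_CHAR[OF assms(1) c] by simp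
  finally have "coeff ([:1,1::'a:] ^ (2 * p - 1)) p = coeff ((monom 1 p + 1) * [:1,1:] ^ (p - 1)) p"
    by (simp add: mon)
  also have "\<dots> = coeff ([:1,1::'a:] ^ (p - 1)) 0 + coeff ([:1,1::'a:] ^ (p - 1)) p"
    by (simp add: distrib_right coeff_monom_mult)
  also have "\<dots> = 1" using p2 by (simp add: coeff_lin_pow binomial_eq_0)
  finally show ?thesis by (simp add: coeff_lin_pow)
qed

lemma pcompose_as_sum':
  assumes "degree g \<le> N"
  shows "pcompose g q = (\<Sum>i\<le>N. smult (coeff g i) (q ^ i))"
  unfolding pcompose_as_sum using assms
  by (intro sum.mono_neutral_left) (auto simp: coeff_eq_0)

lemma orbit_sum_form:
  fixes G :: "'a::comm_ring_1 poly"
  assumes "prime p" "CHAR('a) = p" "degree G < 2 * p"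
  defines "S \<equiv> (\<Sum>r<p. pcompose G [:of_nat r, 1:])"
  shows "S = smult (- coeff G (2 * p - 1)) (wpoly p) + [:poly S 0:]"
proof -
  have p2: "p \<ge> 2" using assms(1) prime_ge_2_nat by blast
  have inv: "pcompose S [:1,1:] = S"
  proof -
    have "pcompose S [:1,1:] = (\<Sum>r<p. pcompose G [:of_nat (Suc r), 1:])"
      unfolding S_def pcompose_sum
      by (intro sum.cong) (simp_all add: pcompose_assoc[symmetric] pcompose_pCons add.commute)
    also have "\<dots> = S"
    proof -
      have "(\<Sum>r<Suc p. pcompose G [:of_nat r, 1:]) = pcompose G [:of_nat 0, 1:] + (\<Sum>r<p. pcompose G [:of_nat (Suc r), 1:])"
        by (rule sum.lessThan_Suc_shift)
      moreover have "(\<Sum>r<Suc p. pcompose G [:of_nat r, 1:]) = S + pcompose G [:of_nat p, 1:]"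
        by (simp add: S_def)
      moreover have "(of_nat p :: 'a) = 0" using of_nat_p_CHAR[OF assms(2)] .
      ultimately show ?thesis by (simp add: add.commute)
    qed
    finally show ?thesis .
  qed
  have dS: "degree S < 2 * p" unfolding S_def
  proof (rule degree_sum_less)
    fix r assume "r \<in> {..<p}"
    have "degree (pcompose G [:of_nat r, 1:]) \<le> degree G * degree [:of_nat r, 1::'a:]"
      using degree_pcompose_le by metis
    also have "\<dots> \<le> degree G" by simp
    finally show "degree (pcompose G [:of_nat r, 1:]) < 2 * p" using assms(3) by simp
  qed (use p2 in simp)
  have form: "S = smult (coeff S p) (wpoly p) + [:poly S 0:]"
    by (rule shift_inv_form[OF assms(1,2) inv dS])
  have "coeff S p = (\<Sum>r<p. \<Sum>i\<le>2 * p - 1. coeff G i * (of_nat (i choose p) * of_nat r ^ (i - p)))"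
    unfolding S_def coeff_sum using assms(3)
    by (subst pcompose_as_sum'[where N = "2 * p - 1"]) (simp_all add: coeff_sum coeff_lin_pow)
  also have "\<dots> = (\<Sum>i\<le>2 * p - 1. coeff G i * of_nat (i choose p) * psum p (i - p))"
    by (subst sum.swap) (simp add: psum_def sum_distrib_left mult.assoc)
  also have "\<dots> = (\<Sum>i\<in>{2 * p - 1}. coeff G i * of_nat (i choose p) * psum p (i - p))"
  proof (rule sum.mono_neutral_right)
    show "\<forall>i\<in>{..2 * p - 1} - {2 * p - 1}. coeff G i * of_nat (i choose p) * (psum p (i - p) :: 'a) = 0"
    proof
      fix i assume i: "i \<in> {..2 * p - 1} - {2 * p - 1}"
      show "coeff G i * of_nat (i choose p) * (psum p (i - p) :: 'a) = 0"
      proof (cases "i < p")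
        case True thus ?thesis by (simp add: binomial_eq_0)
      next
        case False
        hence "i - p + 1 < p" using i by auto
        thus ?thesis using psum_small[OF assms(1,2)] by simp
      qed
    qed
  qed auto
  also have "\<dots> = - coeff G (2 * p - 1)"
    using choose_top_CHAR[OF assms(1,2)] psum_top[OF assms(1,2)] p2
    by (simp add: numeral_2_eq_2 Suc_diff_le diff_diff_left)
  finally show ?thesis using form by simp
qed



lemma matrix_add_rdistrib': "((A::'a::semiring_1^'n^'m) + B) ** C = A ** C + B ** C"
  by (vector matrix_matrix_mult_def sum.distrib[symmetric] field_simps)

lemma matrix_sum_left: "(\<Sum>i\<in>I. A i) ** (B::'a::semiring_1^'p^'n) = (\<Sum>i\<in>I. A i ** B)"
  by (induction I rule: infinite_finite_induct) (simp_all add: matrix_add_rdistrib')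

lemma matrix_sum_right: "(B::'a::semiring_1^'n^'m) ** (\<Sum>i\<in>I. A i) = (\<Sum>i\<in>I. B ** A i)"
  by (induction I rule: infinite_finite_induct) (simp_all add: matrix_add_ldistrib)

lemma matprod_down_cong: "(\<And>k. k < n \<Longrightarrow> f k = g k) \<Longrightarrow> matprod_down f n = matprod_down g n"
  by (induction n) auto

lemma matprod_down_expand:
  fixes F :: "nat \<Rightarrow> nat \<Rightarrow> 'a::comm_semiring_1^'n^'n"
  assumes "finite I"
  shows "matprod_down (\<lambda>k. \<Sum>i\<in>I. F k i) n = (\<Sum>e\<in>{..<n} \<rightarrow>\<^sub>E I. matprod_down (\<lambda>k. F k (e k)) n)"
proof (induction n)
  case 0 show ?case by simp
next
  case (Suc n)
  have "matprod_down (\<lambda>k. \<Sum>i\<in>I. F k i) (Suc n) = (\<Sum>i\<in>I. F n i) ** (\<Sum>e\<in>{..<n} \<rightarrow>\<^sub>E I. matprod_down (\<lambda>k. F k (e k)) n)"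
    using Suc by simp
  also have "\<dots> = (\<Sum>i\<in>I. \<Sum>e\<in>{..<n} \<rightarrow>\<^sub>E I. F n i ** matprod_down (\<lambda>k. F k (e k)) n)"
    by (simp add: matrix_sum_left matrix_sum_right) (rule sum.swap)
  also have "\<dots> = (\<Sum>(i,e)\<in>I \<times> ({..<n} \<rightarrow>\<^sub>E I). F n i ** matprod_down (\<lambda>k. F k (e k)) n)"
    by (subst sum.cartesian_product) auto
  also have "\<dots> = (\<Sum>e\<in>{..<Suc n} \<rightarrow>\<^sub>E I. matprod_down (\<lambda>k. F k (e k)) (Suc n))"
  proof (rule sum.reindex_bij_witness[of _ "\<lambda>e. (e n, e(n := undefined))" "\<lambda>(i,e). e(n := i)"])
    fix ie assume "ie \<in> I \<times> ({..<n} \<rightarrow>\<^sub>E I)"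
    then obtain i e where ie: "ie = (i, e)" "i \<in> I" "e \<in> {..<n} \<rightarrow>\<^sub>E I" by auto
    have "matprod_down (\<lambda>k. F k ((e(n := i)) k)) n = matprod_down (\<lambda>k. F k (e k)) n"
      by (rule matprod_down_cong) simp
    thus "matprod_down (\<lambda>k. F k (((\<lambda>(i, e). e(n := i)) ie) k)) (Suc n) =
          (case ie of (i, e) \<Rightarrow> F n i ** matprod_down (\<lambda>k. F k (e k)) n)"
      using ie by simp
  qed (auto simp: PiE_def extensional_def Pi_def less_Suc_eq)
  finally show ?case .
qed

lemma const_poly_sum: "[:sum f A:] = (\<Sum>x\<in>A. [:f x:])"
proof (induction A rule: infinite_finite_induct)
  case (insert x F)
  have "(\<Sum>y\<in>insert x F. [:f y:]) = [:f x:] + (\<Sum>y\<in>F. [:f y:])" using insert.hyps by simp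
  also have "\<dots> = [:f x:] + [:sum f F:]" using insert.IH by simp
  also have "\<dots> = [:sum f (insert x F):]" using insert.hyps by simp
  finally show ?case by simp
qed simp_all

definition smat :: "'a::times \<Rightarrow> 'a^'n^'m \<Rightarrow> 'a^'n^'m" where
  "smat c A = (\<chi> i j. c * A$i$j)"

definition liftm :: "'a::zero^'n^'m \<Rightarrow> 'a poly^'n^'m" where
  "liftm A = (\<chi> i j. [:A$i$j:])"

lemma smat_mult: "smat c (A::'a::comm_semiring_1^'n^'m) ** smat d B = smat (c * d) (A ** B)"
proof -
  have e: "(c * x) * (d * y) = (c * d) * (x * y)" for x y :: 'a by (simp only: mult_ac)
  show ?thesis unfolding smat_def matrix_matrix_mult_def
    by (simp add: vec_eq_iff e sum_distrib_left)
qed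

lemma smat_1: "smat 1 A = (A :: 'a::monoid_mult^'n^'m)"
  by (simp add: smat_def vec_eq_iff)

lemma matprod_down_smat:
  "matprod_down (\<lambda>k. smat (c k) (M k :: 'a::comm_semiring_1^'n^'n)) n
     = smat (\<Prod>k<n. c k) (matprod_down M n)"
proof (induction n)
  case 0 show ?case by (simp add: smat_1)
next
  case (Suc n) thus ?case by (simp add: smat_mult ac_simps)
qed

lemma liftm_mult: "liftm (A ** B) = liftm (A::'a::comm_semiring_1^'n^'m) ** liftm B"
  by (simp add: liftm_def matrix_matrix_mult_def vec_eq_iff const_poly_sum mult.commute)

lemma liftm_1: "liftm (mat 1 :: 'a::comm_semiring_1^'n^'n) = mat 1"
  by (simp add: liftm_def mat_def vec_eq_iff one_pCons)

lemma matprod_down_liftm: "matprod_down (\<lambda>k. liftm (M k :: 'a::comm_semiring_1^'n^'n)) n = liftm (matprod_down M n)"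
  by (induction n) (simp_all add: liftm_1 liftm_mult)

lemma trace_sum: "trace (\<Sum>i\<in>I. A i) = (\<Sum>i\<in>I. trace (A i :: 'a::comm_semiring_1^'n^'n))"
  by (induction I rule: infinite_finite_induct) (simp_all add: trace_add trace_0[simplified])

lemma trace_smat_liftm: "trace (smat c (liftm A)) = c * [:trace (A::'a::comm_semiring_1^'n^'n):]"
proof -
  have "trace (smat c (liftm A)) = (\<Sum>i\<in>UNIV. c * [:A$i$i:])"
    by (simp add: trace_def smat_def liftm_def)
  also have "\<dots> = c * [:trace A:]"
    by (simp add: trace_def const_poly_sum sum_distrib_left)
  finally show ?thesis .
qed



definition Bsel :: "'a^'n^'n \<Rightarrow> 'a^'n^'n \<Rightarrow> 'a^'n^'n \<Rightarrow> nat \<Rightarrow> 'a^'n^'n" where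
  "Bsel B0 B1 B2 i = (if i = 0 then B0 else if i = 1 then B1 else B2)"

definition wt :: "'a::comm_ring_1^'n^'n \<Rightarrow> 'a^'n^'n \<Rightarrow> 'a^'n^'n \<Rightarrow> nat \<Rightarrow> (nat \<Rightarrow> nat) \<Rightarrow> 'a" where
  "wt B0 B1 B2 p e = trace (matprod_down (\<lambda>k. Bsel B0 B1 B2 (e k)) p)"

definition fe :: "nat \<Rightarrow> (nat \<Rightarrow> nat) \<Rightarrow> 'a::comm_ring_1 poly" where
  "fe p e = (\<Prod>k<p. [:of_nat k, 1:] ^ e k)"

lemma lin_of_nat: "[:0, 1:] + of_nat k = ([:of_nat k, 1:] :: 'a::comm_ring_1 poly)"
  by (simp add: of_nat_poly)

lemma Bpoly_as_sum:
  "Bpoly B0 B1 B2 ([:0, 1:] + of_nat k) =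
     (\<Sum>i\<in>{0,1,2}. smat ([:of_nat k, 1:] ^ i) (liftm (Bsel B0 B1 B2 i)))"
  unfolding Bpoly_def lin_of_nat
  by (simp add: smat_def liftm_def Bsel_def vec_eq_iff mult.commute add.assoc)

lemma expansion:
  fixes B0 B1 B2 :: "'a::comm_ring_1^'n^'n"
  shows "trace (matprod_down (\<lambda>k. Bpoly B0 B1 B2 ([:0, 1:] + of_nat k)) p)
     = (\<Sum>e\<in>{..<p} \<rightarrow>\<^sub>E {0,1,2}. fe p e * [:wt B0 B1 B2 p e:])"
proof -
  have "trace (matprod_down (\<lambda>k. Bpoly B0 B1 B2 ([:0, 1:] + of_nat k)) p)
     = trace (\<Sum>e\<in>{..<p} \<rightarrow>\<^sub>E {0,1,2}. matprod_down (\<lambda>k. smat ([:of_nat k, 1:] ^ e k) (liftm (Bsel B0 B1 B2 (e k)))) p)"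
    unfolding Bpoly_as_sum by (subst matprod_down_expand) auto
  also have "\<dots> = (\<Sum>e\<in>{..<p} \<rightarrow>\<^sub>E {0,1,2}. fe p e * [:wt B0 B1 B2 p e:])"
    unfolding trace_sum
    by (intro sum.cong refl) (simp add: matprod_down_smat matprod_down_liftm trace_smat_liftm fe_def wt_def)
  finally show ?thesis .
qed

definition evm :: "'a::comm_ring_1 poly^'n^'m \<Rightarrow> 'a^'n^'m" where
  "evm A = (\<chi> i j. poly (A$i$j) 0)"

lemma evm_mult: "evm (A ** B) = evm (A::'a::comm_ring_1 poly^'n^'m) ** evm B"
  by (simp add: evm_def matrix_matrix_mult_def vec_eq_iff poly_sum)

lemma evm_1: "evm (mat 1 :: 'a::comm_ring_1 poly^'n^'n) = mat 1"
  by (simp add: evm_def mat_def vec_eq_iff)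

lemma evm_matprod: "evm (matprod_down M n) = matprod_down (\<lambda>k. evm (M k :: 'a::comm_ring_1 poly^'n^'n)) n"
  by (induction n) (simp_all add: evm_1 evm_mult)

lemma trace_evm: "poly (trace A) 0 = trace (evm (A :: 'a::comm_ring_1 poly^'n^'n))"
  by (simp add: trace_def evm_def poly_sum)

lemma evm_Bpoly: "evm (Bpoly B0 B1 B2 ([:0, 1:] + of_nat k)) = Bval B0 B1 B2 (of_nat k)"
  by (simp add: evm_def Bpoly_def Bval_def lin_of_nat vec_eq_iff)

lemma eval_at_0:
  fixes B0 B1 B2 :: "'a::comm_ring_1^'n^'n"
  shows "poly (trace (matprod_down (\<lambda>k. Bpoly B0 B1 B2 ([:0, 1:] + of_nat k)) p)) 0
     = trace (matprod_down (\<lambda>k. Bval B0 B1 B2 (of_nat k)) p)"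
  by (simp add: trace_evm evm_matprod evm_Bpoly)

lemma matprod_down_const: "matprod_down (\<lambda>k. A) n = matpow A n"
  by (induction n) simp_all

lemma matprod_down_Suc_last:
  "matprod_down M (Suc q) = matprod_down (\<lambda>k. M (Suc k)) q ** (M 0 :: 'a::semiring_1^'n^'n)"
  by (induction q arbitrary: M) (simp_all add: matrix_mul_assoc)



lemma bij_mod:
  fixes p r :: nat
  assumes "p > 0"
  shows "bij_betw (\<lambda>k. (k + r) mod p) {..<p} {..<p}"
proof -
  have inj: "inj_on (\<lambda>k. (k + r) mod p) {..<p}"
  proof (rule inj_onI)
    fix a b :: nat assume ab: "a \<in> {..<p}" "b \<in> {..<p}" "(a + r) mod p = (b + r) mod p"
    hence "[a = b] (mod p)" using cong_add_rcancel_nat unfolding cong_def by blast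
    thus "a = b" using ab by (simp add: cong_def)
  qed
  have "(\<lambda>k. (k + r) mod p) ` {..<p} \<subseteq> {..<p}" using assms by auto
  hence "(\<lambda>k. (k + r) mod p) ` {..<p} = {..<p}" using endo_inj_surj[OF _ _ inj] by simp
  thus ?thesis using inj by (simp add: bij_betw_def)
qed

definition rot :: "nat \<Rightarrow> nat \<Rightarrow> (nat \<Rightarrow> nat) \<Rightarrow> (nat \<Rightarrow> nat)" where
  "rot p r e = (\<lambda>k. if k < p then e ((k + r) mod p) else undefined)"

definition Ew :: "nat \<Rightarrow> (nat \<Rightarrow> nat) set" where
  "Ew p = {..<p} \<rightarrow>\<^sub>E {0,1,2}"

definition Nw :: "nat \<Rightarrow> (nat \<Rightarrow> nat) set" where
  "Nw p = {e \<in> Ew p. \<not> (\<exists>i. \<forall>k<p. e k = i)}"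

lemma rot_Ew: "p > 0 \<Longrightarrow> e \<in> Ew p \<Longrightarrow> rot p r e \<in> Ew p"
  unfolding Ew_def PiE_iff extensional_def rot_def by auto

lemma rot_comp: "p > 0 \<Longrightarrow> rot p r (rot p s e) = rot p (r + s) e"
  by (rule ext) (simp add: rot_def mod_add_left_eq add.assoc)

lemma rot_p: "e \<in> Ew p \<Longrightarrow> rot p p e = e"
  by (rule ext) (auto simp: rot_def Ew_def PiE_def extensional_def)

lemma ex_rot_iff:
  fixes p r :: nat and e :: "nat \<Rightarrow> 'b"
  assumes "p > 0"
  shows "(\<exists>k<p. Q (e ((k + r) mod p))) \<longleftrightarrow> (\<exists>j<p. Q (e j))"
proof -
  have img: "(\<lambda>k. (k + r) mod p) ` {..<p} = {..<p}" using bij_mod[OF assms] by (simp add: bij_betw_def)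
  show ?thesis
  proof
    assume "\<exists>k<p. Q (e ((k + r) mod p))"
    then obtain k where "k < p" "Q (e ((k + r) mod p))" by blast
    moreover have "(k + r) mod p < p" using assms by simp
    ultimately show "\<exists>j<p. Q (e j)" by blast
  next
    assume "\<exists>j<p. Q (e j)"
    then obtain j where j: "j < p" "Q (e j)" by blast
    hence "j \<in> (\<lambda>k. (k + r) mod p) ` {..<p}" using img by simp
    then obtain k where "k < p" "j = (k + r) mod p" by auto
    thus "\<exists>k<p. Q (e ((k + r) mod p))" using j by blast
  qed
qed

lemma rot_Nw: "p > 0 \<Longrightarrow> e \<in> Nw p \<Longrightarrow> rot p r e \<in> Nw p"
proof -
  assume p: "p > 0" and e: "e \<in> Nw p"
  have "rot p r e \<in> Ew p" using rot_Ew[OF p] e by (simp add: Nw_def)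
  moreover have "\<not> (\<exists>i. \<forall>k<p. rot p r e k = i)"
  proof
    assume "\<exists>i. \<forall>k<p. rot p r e k = i"
    then obtain i where "\<forall>k<p. e ((k + r) mod p) = i" by (auto simp: rot_def)
    hence "\<not> (\<exists>k<p. e ((k + r) mod p) \<noteq> i)" by blast
    hence "\<not> (\<exists>j<p. e j \<noteq> i)" using ex_rot_iff[OF p, of "\<lambda>x. x \<noteq> i" e r] by blast
    thus False using e by (auto simp: Nw_def)
  qed
  ultimately show ?thesis by (simp add: Nw_def)
qed

lemma bij_rot:
  assumes "p > 0" "r \<le> p"
  shows "bij_betw (rot p r) (Nw p) (Nw p)"
proof (rule bij_betw_byWitness[where f' = "rot p (p - r)"])
  show "\<forall>a\<in>Nw p. rot p (p - r) (rot p r a) = a"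
    using assms by (auto simp: rot_comp rot_p Nw_def)
  show "\<forall>a\<in>Nw p. rot p r (rot p (p - r) a) = a"
    using assms by (auto simp: rot_comp rot_p Nw_def)
  show "rot p r ` Nw p \<subseteq> Nw p" using rot_Nw[OF assms(1)] by auto
  show "rot p (p - r) ` Nw p \<subseteq> Nw p" using rot_Nw[OF assms(1)] by auto
qed

lemma wt_rot1:
  assumes "p > 0"
  shows "wt B0 B1 B2 p (rot p 1 e) = wt B0 B1 B2 p e"
proof -
  obtain q where q: "p = Suc q" using assms gr0_implies_Suc by blast
  define M where "M = (\<lambda>k. Bsel B0 B1 B2 (e k))"
  have "matprod_down (\<lambda>k. Bsel B0 B1 B2 (rot p 1 e k)) p
      = M 0 ** matprod_down (\<lambda>k. M (Suc k)) q"
  proof -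
    have "matprod_down (\<lambda>k. Bsel B0 B1 B2 (rot p 1 e k)) p
        = Bsel B0 B1 B2 (rot p 1 e q) ** matprod_down (\<lambda>k. Bsel B0 B1 B2 (rot p 1 e k)) q"
      by (simp add: q)
    also have "rot p 1 e q = e 0" by (simp add: rot_def q)
    also have "matprod_down (\<lambda>k. Bsel B0 B1 B2 (rot p 1 e k)) q = matprod_down (\<lambda>k. M (Suc k)) q"
      by (rule matprod_down_cong) (simp add: rot_def q M_def)
    finally show ?thesis by (simp add: M_def)
  qed
  moreover have "matprod_down M p = matprod_down (\<lambda>k. M (Suc k)) q ** M 0"
    unfolding q by (rule matprod_down_Suc_last)
  ultimately show ?thesis unfolding wt_def M_def[symmetric] by (metis trace_mul_sym)
qed

lemma wt_rot:
  assumes "p > 0"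
  shows "wt B0 B1 B2 p (rot p r e) = wt B0 B1 B2 p e"
proof (induction r)
  case 0
  have "matprod_down (\<lambda>k. Bsel B0 B1 B2 (rot p 0 e k)) p = matprod_down (\<lambda>k. Bsel B0 B1 B2 (e k)) p"
    by (rule matprod_down_cong) (simp add: rot_def)
  thus ?case by (simp add: wt_def)
next
  case (Suc r)
  have eq: "rot p (Suc r) e = rot p 1 (rot p r e)" using rot_comp[OF assms] by simp
  have "wt B0 B1 B2 p (rot p (Suc r) e) = wt B0 B1 B2 p (rot p 1 (rot p r e))" by (simp only: eq)
  also have "\<dots> = wt B0 B1 B2 p (rot p r e)" by (rule wt_rot1[OF assms])
  also have "\<dots> = wt B0 B1 B2 p e" by (rule Suc.IH)
  finally show ?case .
qed

lemma fe_rot: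
  assumes "prime p" "CHAR('a::comm_ring_1) = p"
  shows "pcompose (fe p (rot p r e) :: 'a poly) [:of_nat r, 1:] = fe p e"
proof -
  have p: "p > 0" using assms(1) prime_gt_0_nat by blast
  have lin: "pcompose [:of_nat k, 1:] [:of_nat r, 1:] = ([:of_nat ((k + r) mod p), 1:] :: 'a poly)" for k
    using of_nat_mod_CHAR[OF assms(2), of "k + r"] by (simp add: pcompose_pCons)
  have "pcompose (fe p (rot p r e) :: 'a poly) [:of_nat r, 1:]
      = (\<Prod>k<p. [:of_nat ((k + r) mod p), 1:] ^ e ((k + r) mod p))"
    unfolding fe_def pcompose_prod pcompose_power lin
    by (intro prod.cong) (simp_all add: rot_def)
  also have "\<dots> = (\<Prod>j<p. [:of_nat j, 1:] ^ e j)"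
    by (rule prod.reindex_bij_betw[OF bij_mod[OF p], where g = "\<lambda>j. [:of_nat j, 1:] ^ e j"])
  finally show ?thesis by (simp add: fe_def)
qed



definition lw :: "nat \<Rightarrow> (nat \<Rightarrow> nat) \<Rightarrow> nat" where
  "lw p e = (if \<exists>k<p. e k = 0 then 0 else 1)"

definition cnt :: "nat \<Rightarrow> (nat \<Rightarrow> nat) \<Rightarrow> nat" where
  "cnt p e = card {k\<in>{..<p}. e k = lw p e}"

definition invn :: "nat \<Rightarrow> 'a::comm_ring_1" where
  "invn n = (SOME u. of_nat n * u = 1)"

definition hw :: "nat \<Rightarrow> (nat \<Rightarrow> nat) \<Rightarrow> 'a::comm_ring_1" where
  "hw p e = (if e 0 = lw p e then invn (cnt p e) else 0)"

lemma rot_app: "k < p \<Longrightarrow> rot p r e k = e ((k + r) mod p)"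
  by (simp add: rot_def)

lemma lw_rot:
  assumes p: "p > 0" shows "lw p (rot p r e) = lw p e"
proof -
  have eq: "(\<exists>k<p. rot p r e k = 0) \<longleftrightarrow> (\<exists>k<p. e ((k + r) mod p) = 0)"
    using rot_app by metis
  have eq2: "(\<exists>k<p. e ((k + r) mod p) = 0) \<longleftrightarrow> (\<exists>j<p. e j = 0)"
    by (rule ex_rot_iff[OF p, of "\<lambda>x. x = 0" e r])
  show ?thesis unfolding lw_def by (simp only: eq eq2)
qed

lemma card_filter_sum: "finite A \<Longrightarrow> card {k\<in>A. P k} = (\<Sum>k\<in>A. if P k then 1 else 0)"
proof -
  assume fin: "finite A"
  have "card {k\<in>A. P k} = sum (\<lambda>_. 1) {k\<in>A. P k}" by (rule card_eq_sum)
  also have "\<dots> = (\<Sum>k\<in>A. if P k then 1 else 0)" by (rule sum.inter_filter[OF fin])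
  finally show ?thesis .
qed

lemma cnt_rot:
  assumes "p > 0"
  shows "cnt p (rot p r e) = cnt p e"
proof -
  have "cnt p (rot p r e) = card {k\<in>{..<p}. e ((k + r) mod p) = lw p e}"
    unfolding cnt_def lw_rot[OF assms] by (intro arg_cong[where f = card] Collect_cong) (auto simp: rot_app)
  also have "\<dots> = (\<Sum>k<p. (\<lambda>j. if e j = lw p e then 1 else 0) ((k + r) mod p))"
    using card_filter_sum[of "{..<p}" "\<lambda>k. e ((k + r) mod p) = lw p e"] by simp
  also have "\<dots> = (\<Sum>j<p. if e j = lw p e then 1 else 0)"
    by (rule sum.reindex_bij_betw[OF bij_mod[OF assms]])
  also have "\<dots> = cnt p e"
    using card_filter_sum[of "{..<p}" "\<lambda>k. e k = lw p e"] by (simp add: cnt_def)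
  finally show ?thesis .
qed

lemma cnt_bounds:
  assumes "p > 0" "e \<in> Nw p"
  shows "0 < cnt p e \<and> cnt p e < p"
proof -
  have eEw: "e \<in> Ew p" using assms(2) by (simp add: Nw_def)
  have nc: "\<And>i. \<exists>k<p. e k \<noteq> i" using assms(2) unfolding Nw_def by blast
  have eE: "\<And>k. k < p \<Longrightarrow> e k \<in> {0,1,2}" using eEw unfolding Ew_def PiE_iff by blast
  define S where "S = {k\<in>{..<p}. e k = lw p e}"
  have sub: "S \<subseteq> {..<p}" by (auto simp: S_def)
  have finS: "finite S" using finite_subset[OF sub] by simp
  have "\<exists>k<p. e k = lw p e"
  proof (cases "\<exists>k<p. e k = 0")
    case True thus ?thesis by (simp add: lw_def)
  next
    case nz: False
    obtain k where k: "k < p" "e k \<noteq> 2" using nc[of 2] by blast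
    have "e k \<in> {0,1,2}" using eE k(1) by blast
    moreover have "e k \<noteq> 0" using nz k(1) by simp
    ultimately have "e k = 1" using k(2) by simp
    moreover have "lw p e = 1" using nz by (simp add: lw_def)
    ultimately show ?thesis using k(1) by metis
  qed
  then obtain k where "k < p" "e k = lw p e" by blast
  hence "k \<in> S" by (simp add: S_def)
  hence "S \<noteq> {}" by blast
  hence c0: "0 < card S" using finS by (simp add: card_gt_0_iff)
  have "card S \<le> card {..<p}" by (rule card_mono[OF _ sub]) simp
  hence le: "card S \<le> p" by simp
  have "card S \<noteq> p"
  proof
    assume "card S = p"
    hence "S = {..<p}" using card_subset_eq[OF _ sub] by simp
    hence "\<forall>k<p. e k = lw p e" unfolding S_def by blast
    thus False using nc[of "lw p e"] by blast
  qed
  thus ?thesis using c0 le unfolding cnt_def S_def[symmetric] by linarith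
qed

lemma invn_spec:
  assumes "prime p" "CHAR('a::comm_ring_1) = p" "\<not> p dvd n"
  shows "of_nat n * (invn n :: 'a) = 1"
  unfolding invn_def by (rule someI_ex[OF of_nat_unit_CHAR[OF assms]])

lemma hw_sum:
  assumes "prime p" "CHAR('a::comm_ring_1) = p" "e \<in> Nw p"
  shows "(\<Sum>r<p. hw p (rot p r e) :: 'a) = 1"
proof -
  have p: "p > 0" using assms(1) prime_gt_0_nat by blast
  have "(\<Sum>r<p. hw p (rot p r e) :: 'a) = (\<Sum>r<p. if e r = lw p e then invn (cnt p e) else 0)"
    unfolding hw_def lw_rot[OF p] cnt_rot[OF p] by (intro sum.cong refl) (simp add: rot_def p)
  also have "\<dots> = (\<Sum>r\<in>{r\<in>{..<p}. e r = lw p e}. (invn (cnt p e) :: 'a))"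
    by (rule sum.inter_filter[symmetric]) simp
  also have "\<dots> = of_nat (cnt p e) * invn (cnt p e)" unfolding cnt_def by (rule sum_constant)
  also have "\<dots> = 1"
    using cnt_bounds[OF p assms(3)] by (intro invn_spec[OF assms(1,2)]) (simp add: nat_dvd_not_less)
  finally show ?thesis .
qed



lemma coeff_mult_bound:
  fixes a b :: "'a::comm_semiring_1 poly"
  assumes "degree a \<le> m" "degree b \<le> n"
  shows "coeff (a * b) (m + n) = coeff a m * coeff b n"
proof -
  have "coeff (a * b) (m + n) = (\<Sum>i\<le>m + n. coeff a i * coeff b (m + n - i))" by (rule coeff_mult)
  also have "\<dots> = (\<Sum>i\<in>{m}. coeff a i * coeff b (m + n - i))"
  proof (rule sum.mono_neutral_right)
    show "\<forall>i\<in>{..m + n} - {m}. coeff a i * coeff b (m + n - i) = 0"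
    proof
      fix i assume i: "i \<in> {..m + n} - {m}"
      show "coeff a i * coeff b (m + n - i) = 0"
      proof (cases "i < m")
        case True
        hence "coeff b (m + n - i) = 0" using assms(2) by (intro coeff_eq_0) simp
        thus ?thesis by simp
      next
        case False
        hence "coeff a i = 0" using i assms(1) by (intro coeff_eq_0) auto
        thus ?thesis by simp
      qed
    qed
  qed auto
  finally show ?thesis by simp
qed

lemma monic_prod:
  fixes c :: "nat \<Rightarrow> 'a::comm_ring_1"
  assumes "finite A"
  shows "degree (\<Prod>k\<in>A. [:c k, 1:] ^ n k) \<le> (\<Sum>k\<in>A. n k) \<and>
         coeff (\<Prod>k\<in>A. [:c k, 1:] ^ n k) (\<Sum>k\<in>A. n k) = 1"
  using assms
proof (induction A rule: finite_induct)
  case empty thus ?case by simp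
next
  case (insert x A)
  let ?q = "\<Prod>k\<in>A. [:c k, 1:] ^ n k"
  have dx: "degree ([:c x, 1:] ^ n x) \<le> n x"
    by (rule order.trans[OF degree_power_le]) simp
  have cx: "coeff ([:c x, 1:] ^ n x) (n x) = 1" by (simp add: coeff_linear_power)
  have dq: "degree ?q \<le> (\<Sum>k\<in>A. n k)" using insert.IH by blast
  have cq: "coeff ?q (\<Sum>k\<in>A. n k) = 1" using insert.IH by blast
  have "degree ([:c x, 1:] ^ n x * ?q) \<le> n x + (\<Sum>k\<in>A. n k)"
    using dx dq by (intro order.trans[OF degree_mult_le]) simp
  moreover have "coeff ([:c x, 1:] ^ n x * ?q) (n x + (\<Sum>k\<in>A. n k)) = 1"
    using coeff_mult_bound[OF dx dq] cx cq by simp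
  ultimately show ?case using insert.hyps by simp
qed

lemma fe_monic:
  "degree (fe p e :: 'a::comm_ring_1 poly) \<le> (\<Sum>k<p. e k) \<and> coeff (fe p e :: 'a poly) (\<Sum>k<p. e k) = 1"
  unfolding fe_def by (rule monic_prod) simp

lemma Nw_le2: "e \<in> Nw p \<Longrightarrow> k < p \<Longrightarrow> e k \<le> 2"
proof -
  assume "e \<in> Nw p" "k < p"
  hence "e k \<in> {0,1,2}" unfolding Nw_def Ew_def PiE_iff by blast
  thus "e k \<le> 2" by auto
qed

lemma sum_Nw:
  assumes "e \<in> Nw p"
  shows "(\<Sum>k<p. e k) \<le> 2 * p - 1"
proof -
  obtain k0 where k0: "k0 < p" "e k0 \<noteq> 2" using assms unfolding Nw_def by blast
  have "e k0 \<le> 2" using Nw_le2[OF assms k0(1)] .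
  hence e0: "e k0 \<le> 1" using k0(2) by simp
  have "(\<Sum>k<p. e k) = e k0 + (\<Sum>k\<in>{..<p} - {k0}. e k)"
    by (rule sum.remove) (use k0 in auto)
  also have "(\<Sum>k\<in>{..<p} - {k0}. e k) \<le> of_nat (card ({..<p} - {k0})) * 2"
    by (rule sum_bounded_above) (use Nw_le2[OF assms] in auto)
  also have "card ({..<p} - {k0}) = p - 1" using k0(1) by simp
  finally show ?thesis using e0 k0(1) by simp
qed

definition Gp :: "'a::comm_ring_1^'n^'n \<Rightarrow> 'a^'n^'n \<Rightarrow> 'a^'n^'n \<Rightarrow> nat \<Rightarrow> 'a poly" where
  "Gp B0 B1 B2 p = (\<Sum>e\<in>Nw p. smult (hw p e * wt B0 B1 B2 p e) (fe p e))"

lemma NC_orbit: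
  assumes "prime p" "CHAR('a::comm_ring_1) = p"
  shows "(\<Sum>e\<in>Nw p. smult (wt B0 B1 B2 p e) (fe p e) :: 'a poly)
       = (\<Sum>r<p. pcompose (Gp B0 B1 B2 p) [:of_nat r, 1:])"
proof -
  have p: "p > 0" using assms(1) prime_gt_0_nat by blast
  have "(\<Sum>e\<in>Nw p. smult (wt B0 B1 B2 p e) (fe p e) :: 'a poly)
      = (\<Sum>e\<in>Nw p. \<Sum>r<p. smult (hw p (rot p r e) * wt B0 B1 B2 p e) (fe p e))"
  proof (rule sum.cong[OF refl])
    fix e assume e: "e \<in> Nw p"
    have "(smult (wt B0 B1 B2 p e) (fe p e) :: 'a poly)
        = smult (\<Sum>r<p. hw p (rot p r e)) (smult (wt B0 B1 B2 p e) (fe p e))"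
      using hw_sum[OF assms e] by simp
    also have "\<dots> = (\<Sum>r<p. smult (hw p (rot p r e) * wt B0 B1 B2 p e) (fe p e))"
      by (simp add: smult_sum sum_distrib_right)
    finally show "(smult (wt B0 B1 B2 p e) (fe p e) :: 'a poly)
        = (\<Sum>r<p. smult (hw p (rot p r e) * wt B0 B1 B2 p e) (fe p e))" .
  qed
  also have "\<dots> = (\<Sum>r<p. \<Sum>e\<in>Nw p. smult (hw p (rot p r e) * wt B0 B1 B2 p e) (fe p e))"
    by (rule sum.swap)
  also have "\<dots> = (\<Sum>r<p. pcompose (Gp B0 B1 B2 p) [:of_nat r, 1:])"
  proof (rule sum.cong[OF refl])
    fix r assume r: "r \<in> {..<p}"
    define \<phi> where "\<phi> = (\<lambda>e'. smult (hw p e' * wt B0 B1 B2 p e') (pcompose (fe p e') [:of_nat r, 1:]) :: 'a poly)"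
    have "(\<Sum>e\<in>Nw p. smult (hw p (rot p r e) * wt B0 B1 B2 p e) (fe p e)) = (\<Sum>e\<in>Nw p. \<phi> (rot p r e))"
      by (intro sum.cong refl) (simp only: \<phi>_def fe_rot[OF assms] wt_rot[OF p])
    also have "\<dots> = (\<Sum>e\<in>Nw p. \<phi> e)"
      by (rule sum.reindex_bij_betw[OF bij_rot[OF p]]) (use r in simp)
    also have "\<dots> = pcompose (Gp B0 B1 B2 p) [:of_nat r, 1:]"
      by (simp add: Gp_def \<phi>_def pcompose_sum pcompose_smult)
    finally show "(\<Sum>e\<in>Nw p. smult (hw p (rot p r e) * wt B0 B1 B2 p e) (fe p e))
        = pcompose (Gp B0 B1 B2 p) [:of_nat r, 1:]" .
  qed
  finally show ?thesis .
qed

lemma degree_Gp: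
  assumes "prime p"
  shows "degree (Gp B0 B1 B2 p :: 'a::comm_ring_1 poly) < 2 * p"
  unfolding Gp_def
proof (rule degree_sum_less)
  fix e assume e: "e \<in> Nw p"
  have "degree (smult (hw p e * wt B0 B1 B2 p e) (fe p e) :: 'a poly) \<le> degree (fe p e :: 'a poly)"
    by (rule degree_smult_le)
  also have "\<dots> \<le> (\<Sum>k<p. e k)" using fe_monic by blast
  also have "\<dots> \<le> 2 * p - 1" by (rule sum_Nw[OF e])
  finally show "degree (smult (hw p e * wt B0 B1 B2 p e) (fe p e) :: 'a poly) < 2 * p"
    using prime_gt_0_nat[OF assms] by linarith
qed (use prime_gt_0_nat[OF assms] in simp)



definition estar :: "nat \<Rightarrow> nat \<Rightarrow> nat" where
  "estar p = (\<lambda>k. if k < p then (if k = 0 then 1 else 2) else undefined)"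

lemma estar_Nw:
  assumes "p \<ge> 2"
  shows "estar p \<in> Nw p"
proof -
  have "estar p \<in> Ew p" unfolding Ew_def PiE_iff extensional_def estar_def by simp
  moreover have "\<not> (\<exists>i. \<forall>k<p. estar p k = i)"
  proof
    assume "\<exists>i. \<forall>k<p. estar p k = i"
    then obtain i where i: "\<forall>k<p. estar p k = i" by blast
    have "estar p 0 = i" using i assms by simp
    moreover have "estar p 1 = i" using i assms by simp
    ultimately show False using assms by (simp add: estar_def)
  qed
  ultimately show ?thesis by (simp add: Nw_def)
qed

lemma sum_estar:
  assumes "p > 0"
  shows "(\<Sum>k<p. estar p k) = 2 * p - 1"
proof -
  obtain q where q: "p = Suc q" using assms gr0_implies_Suc by blast
  have "(\<Sum>k<p. estar p k) = estar p 0 + (\<Sum>k<q. estar p (Suc k))"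
    unfolding q by (rule sum.lessThan_Suc_shift)
  also have "(\<Sum>k<q. estar p (Suc k)) = (\<Sum>k<q. 2)"
    by (intro sum.cong refl) (simp add: estar_def q)
  finally show ?thesis by (simp add: estar_def q)
qed

lemma hw_estar:
  assumes "prime p" "CHAR('a::comm_ring_1) = p"
  shows "hw p (estar p) = (1::'a)"
proof -
  have p2: "p \<ge> 2" using assms(1) prime_ge_2_nat by blast
  have lw: "lw p (estar p) = 1" unfolding lw_def estar_def by auto
  have "{k\<in>{..<p}. estar p k = 1} = {0}" using p2 by (auto simp: estar_def)
  hence cnt: "cnt p (estar p) = 1" by (simp add: cnt_def lw)
  have "of_nat 1 * (invn 1 :: 'a) = 1"
    by (rule invn_spec[OF assms]) (use p2 in \<open>simp add: nat_dvd_not_less\<close>)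
  hence "(invn 1 :: 'a) = 1" by simp
  thus ?thesis unfolding hw_def using lw cnt p2 by (simp add: estar_def)
qed

lemma wt_estar:
  assumes "p > 0"
  shows "wt B0 B1 B2 p (estar p) = trace (matpow B2 (p - 1) ** B1)"
proof -
  obtain q where q: "p = Suc q" using assms gr0_implies_Suc by blast
  have "matprod_down (\<lambda>k. Bsel B0 B1 B2 (estar p k)) p
      = matprod_down (\<lambda>k. Bsel B0 B1 B2 (estar p (Suc k))) q ** Bsel B0 B1 B2 (estar p 0)"
    unfolding q by (rule matprod_down_Suc_last)
  also have "matprod_down (\<lambda>k. Bsel B0 B1 B2 (estar p (Suc k))) q = matprod_down (\<lambda>k. B2) q"
    by (rule matprod_down_cong) (simp add: estar_def Bsel_def q)
  also have "Bsel B0 B1 B2 (estar p 0) = B1" by (simp add: estar_def Bsel_def q)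
  finally show ?thesis by (simp add: wt_def matprod_down_const q)
qed

lemma only_estar:
  assumes "prime p" "e \<in> Nw p" "hw p e \<noteq> (0::'a::comm_ring_1)" "(\<Sum>k<p. e k) = 2 * p - 1"
  shows "e = estar p"
proof -
  have p2: "p \<ge> 2" using assms(1) prime_ge_2_nat by blast
  have l: "e 0 = lw p e" using assms(3) unfolding hw_def by presburger
  have le2: "\<And>k. k < p \<Longrightarrow> e k \<le> 2" using Nw_le2[OF assms(2)] .
  define R where "R = {..<p} - {0}"
  have cR: "card R = p - 1" using p2 by (simp add: R_def)
  have finR: "finite R" by (simp add: R_def)
  have rest: "(\<Sum>k\<in>R. e k) \<le> of_nat (card R) * 2"
    by (rule sum_bounded_above) (use le2 in \<open>auto simp: R_def\<close>)
  have split: "(\<Sum>k<p. e k) = e 0 + (\<Sum>k\<in>R. e k)"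
    unfolding R_def by (rule sum.remove) (use p2 in auto)
  have "e 0 \<ge> 1" using split rest cR assms(4) p2 by simp
  hence "lw p e \<noteq> 0" using l by simp
  hence "lw p e = 1" unfolding lw_def by presburger
  hence e0: "e 0 = 1" using l by simp
  have sR: "(\<Sum>k\<in>R. e k) = 2 * (p - 1)" using split e0 assms(4) p2 by simp
  have all2: "\<forall>k\<in>R. e k = 2"
  proof (rule ccontr)
    assume "\<not> (\<forall>k\<in>R. e k = 2)"
    then obtain k1 where k1: "k1 \<in> R" "e k1 \<noteq> 2" by blast
    have "e k1 < 2" using k1 le2[of k1] by (simp add: R_def)
    hence "(\<Sum>k\<in>R. e k) < (\<Sum>k\<in>R. 2)"
      using finR k1(1) le2 by (intro sum_strict_mono_ex1) (auto simp: R_def)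
    thus False using sR cR by simp
  qed
  have outside: "e k = undefined" if "\<not> k < p" for k
    using assms(2) that unfolding Nw_def Ew_def PiE_def extensional_def by simp
  show ?thesis
  proof (rule ext)
    fix k show "e k = estar p k"
    proof (cases "k < p")
      case True
      show ?thesis
      proof (cases "k = 0")
        case True thus ?thesis using e0 p2 by (simp add: estar_def)
      next
        case False
        hence "k \<in> R" using \<open>k < p\<close> by (simp add: R_def)
        thus ?thesis using all2 False \<open>k < p\<close> by (simp add: estar_def)
      qed
    next
      case False thus ?thesis using outside by (simp add: estar_def)
    qed
  qed
qed

lemma coeff_Gp:
  assumes "prime p" "CHAR('a::comm_ring_1) = p"
  shows "coeff (Gp B0 B1 B2 p :: 'a poly) (2 * p - 1) = trace (matpow B2 (p - 1) ** B1)"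
proof -
  have p2: "p \<ge> 2" using assms(1) prime_ge_2_nat by blast
  have "coeff (Gp B0 B1 B2 p :: 'a poly) (2 * p - 1)
      = (\<Sum>e\<in>Nw p. hw p e * wt B0 B1 B2 p e * coeff (fe p e :: 'a poly) (2 * p - 1))"
    by (simp add: Gp_def coeff_sum)
  also have "\<dots> = (\<Sum>e\<in>{estar p}. hw p e * wt B0 B1 B2 p e * coeff (fe p e :: 'a poly) (2 * p - 1))"
  proof (rule sum.mono_neutral_right)
    show "finite (Nw p)" by (simp add: Nw_def Ew_def finite_PiE)
    show "{estar p} \<subseteq> Nw p" using estar_Nw[OF p2] by simp
    show "\<forall>e\<in>Nw p - {estar p}. hw p e * wt B0 B1 B2 p e * coeff (fe p e :: 'a poly) (2 * p - 1) = 0"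
    proof
      fix e assume e: "e \<in> Nw p - {estar p}"
      show "hw p e * wt B0 B1 B2 p e * coeff (fe p e :: 'a poly) (2 * p - 1) = 0"
      proof (cases "hw p e = (0::'a)")
        case True thus ?thesis by simp
      next
        case False
        have "(\<Sum>k<p. e k) \<noteq> 2 * p - 1" using only_estar[OF assms(1) _ False] e by blast
        hence "(\<Sum>k<p. e k) < 2 * p - 1" using sum_Nw[of e p] e by simp
        hence "degree (fe p e :: 'a poly) < 2 * p - 1" using fe_monic[of p e, where 'a='a, THEN conjunct1] by linarith
        hence "coeff (fe p e :: 'a poly) (2 * p - 1) = 0" by (intro coeff_eq_0)
        thus ?thesis by simp
      qed
    qed
  qed
  also have "\<dots> = trace (matpow B2 (p - 1) ** B1)"
    using hw_estar[OF assms] wt_estar[of p B0 B1 B2] fe_monic[of p "estar p", where 'a='a] sum_estar[of p] p2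
    by simp
  finally show ?thesis .
qed



definition cw :: "nat \<Rightarrow> nat \<Rightarrow> nat \<Rightarrow> nat" where
  "cw p i = (\<lambda>k. if k < p then i else undefined)"

lemma Ew_split:
  assumes "p > 0"
  shows "Ew p = Nw p \<union> cw p ` {0,1,2}" and "Nw p \<inter> cw p ` {0,1,2} = {}"
proof -
  show "Ew p = Nw p \<union> cw p ` {0,1,2}"
  proof (intro equalityI subsetI)
    fix e assume e: "e \<in> Ew p"
    show "e \<in> Nw p \<union> cw p ` {0,1,2}"
    proof (cases "\<exists>i. \<forall>k<p. e k = i")
      case False thus ?thesis using e by (simp add: Nw_def)
    next
      case True
      then obtain i where i: "\<forall>k<p. e k = i" by blast
      have "e 0 \<in> {0,1,2}" using e assms unfolding Ew_def PiE_iff by blast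
      hence i3: "i \<in> {0,1,2}" using i assms by simp
      have "e = cw p i"
      proof (rule ext)
        fix k show "e k = cw p i k"
        proof (cases "k < p")
          case True thus ?thesis using i by (simp add: cw_def)
        next
          case False
          hence "e k = undefined" using e unfolding Ew_def PiE_def extensional_def by simp
          thus ?thesis using False by (simp add: cw_def)
        qed
      qed
      thus ?thesis using i3 by blast
    qed
  next
    fix e assume "e \<in> Nw p \<union> cw p ` {0,1,2}"
    thus "e \<in> Ew p"
    proof
      assume "e \<in> Nw p" thus ?thesis by (simp add: Nw_def)
    next
      assume "e \<in> cw p ` {0,1,2}"
      then obtain i where "i \<in> {0,1,2}" "e = cw p i" by blast
      thus ?thesis unfolding Ew_def PiE_iff extensional_def cw_def by simp
    qed
  qed
  show "Nw p \<inter> cw p ` {0,1,2} = {}"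
  proof (rule ccontr)
    assume "Nw p \<inter> cw p ` {0,1,2} \<noteq> {}"
    then obtain i where "cw p i \<in> Nw p" by blast
    hence "\<not> (\<exists>j. \<forall>k<p. cw p i k = j)" by (simp add: Nw_def)
    moreover have "\<forall>k<p. cw p i k = i" by (simp add: cw_def)
    ultimately show False by blast
  qed
qed

lemma inj_cw: "p > 0 \<Longrightarrow> inj_on (cw p) A"
  by (rule inj_onI) (metis cw_def)

lemma rot_cw: "p > 0 \<Longrightarrow> rot p r (cw p i) = cw p i"
  by (rule ext) (simp add: rot_def cw_def)

lemma fe_cw1:
  assumes "prime p" "CHAR('a::comm_ring_1) = p"
  shows "(fe p (cw p 1) :: 'a poly) = wpoly p"
proof -
  have p: "p > 0" using assms(1) prime_gt_0_nat by blast
  let ?P = "fe p (cw p 1) :: 'a poly"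
  have inv: "pcompose ?P [:1,1:] = ?P"
    using fe_rot[OF assms, of 1 "cw p 1"] rot_cw[OF p] by simp
  have s: "(\<Sum>k<p. cw p 1 k) = p" by (simp add: cw_def)
  have dP: "degree ?P \<le> p" and cP: "coeff ?P p = 1"
    using fe_monic[of p "cw p 1", where 'a='a] s by simp_all
  have "degree ?P < 2 * p" using dP p by simp
  hence form: "?P = smult (coeff ?P p) (wpoly p) + [:poly ?P 0:]"
    by (rule shift_inv_form[OF assms inv])
  have "poly ?P 0 = (\<Prod>k<p. (of_nat k :: 'a) ^ cw p 1 k)"
    by (simp add: fe_def poly_prod)
  also have "\<dots> = 0" using p by (intro prod_zero) (auto simp: cw_def intro!: bexI[of _ 0])
  finally show ?thesis using form cP by simp
qed

lemma fe_cw: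
  assumes "prime p" "CHAR('a::comm_ring_1) = p"
  shows "(fe p (cw p i) :: 'a poly) = wpoly p ^ i"
proof -
  have "(fe p (cw p i) :: 'a poly) = (\<Prod>k<p. [:of_nat k, 1:] ^ i)"
    unfolding fe_def by (intro prod.cong refl) (simp add: cw_def)
  also have "\<dots> = (\<Prod>k<p. [:of_nat k, 1:]) ^ i" by (simp add: prod_power_distrib)
  also have "(\<Prod>k<p. [:of_nat k, 1:]) = (fe p (cw p 1) :: 'a poly)"
    unfolding fe_def by (intro prod.cong refl) (simp add: cw_def)
  finally show ?thesis using fe_cw1[OF assms] by simp
qed

lemma wt_cw: "wt B0 B1 B2 p (cw p i) = trace (matpow (Bsel B0 B1 B2 i) p)"
proof -
  have "matprod_down (\<lambda>k. Bsel B0 B1 B2 (cw p i k)) p = matprod_down (\<lambda>k. Bsel B0 B1 B2 i) p"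
    by (rule matprod_down_cong) (simp add: cw_def)
  thus ?thesis by (simp add: wt_def matprod_down_const)
qed

theorem lemma3p4:
  fixes B0 B1 B2 :: "'a::comm_ring_1^2^2"
    and p :: nat
  assumes "prime p"
    and "CHAR('a) = p"
  defines "z \<equiv> [:0, 1:] :: 'a poly"
  shows "trace (matprod_down (\<lambda>k. Bpoly B0 B1 B2 (z + of_nat k)) p)
       = (z^p - z)^2 * [:trace (matpow B2 p):]
         - (z^p - z) * [:trace (matpow B2 (p - 1) ** B1):]
         + (z^p - z) * [:trace (matpow B1 p):]
         + [:trace (matprod_down (\<lambda>k. Bval B0 B1 B2 (of_nat k)) p):]"
proof -
  have p: "p > 0" using assms(1) prime_gt_0_nat by blast
  define T where "T = trace (matprod_down (\<lambda>k. Bpoly B0 B1 B2 ([:0, 1:] + of_nat k)) p)"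
  define w where "w = (wpoly p :: 'a poly)"
  define ts where "ts = trace (matpow B2 (p - 1) ** B1)"
  define NC where "NC = (\<Sum>e\<in>Nw p. smult (wt B0 B1 B2 p e) (fe p e) :: 'a poly)"
  have zw: "z ^ p - z = w" by (simp add: z_def w_def wpoly_def)
  have T0: "poly T 0 = trace (matprod_down (\<lambda>k. Bval B0 B1 B2 (of_nat k)) p)"
    unfolding T_def by (rule eval_at_0)
  have w0: "poly w 0 = 0" unfolding w_def by (rule wpoly_0[OF assms(1)])
  have "T = (\<Sum>e\<in>Ew p. fe p e * [:wt B0 B1 B2 p e:])"
    unfolding T_def Ew_def by (rule expansion)
  also have "\<dots> = (\<Sum>e\<in>Ew p. smult (wt B0 B1 B2 p e) (fe p e))"
    by (intro sum.cong refl) (simp add: mult.commute)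
  also have "\<dots> = NC + (\<Sum>e\<in>cw p ` {0,1,2}. smult (wt B0 B1 B2 p e) (fe p e))"
  proof -
    have finN: "finite (Nw p)" by (simp add: Nw_def Ew_def finite_PiE)
    have finC: "finite (cw p ` {0,1,2})" by simp
    show ?thesis unfolding NC_def Ew_split(1)[OF p]
      by (rule sum.union_disjoint[OF finN finC Ew_split(2)[OF p]])
  qed
  also have "(\<Sum>e\<in>cw p ` {0,1,2}. smult (wt B0 B1 B2 p e) (fe p e))
      = (\<Sum>i\<in>{0,1,2}. smult (wt B0 B1 B2 p (cw p i)) (fe p (cw p i)))"
    by (rule sum.reindex[OF inj_cw[OF p], unfolded comp_def])
  also have "\<dots> = (\<Sum>i\<in>{0,1,2}. smult (trace (matpow (Bsel B0 B1 B2 i) p)) (w ^ i))"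
    by (intro sum.cong refl) (simp add: wt_cw fe_cw[OF assms(1,2)] w_def)
  also have "\<dots> = [:trace (matpow B0 p):] + smult (trace (matpow B1 p)) w + smult (trace (matpow B2 p)) (w ^ 2)"
    by (simp add: Bsel_def)
  finally have hT: "T = NC + ([:trace (matpow B0 p):] + smult (trace (matpow B1 p)) w
                       + smult (trace (matpow B2 p)) (w ^ 2))" .
  have "NC = (\<Sum>r<p. pcompose (Gp B0 B1 B2 p) [:of_nat r, 1:])"
    unfolding NC_def by (rule NC_orbit[OF assms(1,2)])
  also have "\<dots> = smult (- coeff (Gp B0 B1 B2 p) (2 * p - 1)) (wpoly p)
       + [:poly (\<Sum>r<p. pcompose (Gp B0 B1 B2 p) [:of_nat r, 1:]) 0:]"
    by (rule orbit_sum_form[OF assms(1,2) degree_Gp[OF assms(1)]])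
  finally have hNC: "NC = smult (- ts) w + [:poly NC 0:]"
    unfolding coeff_Gp[OF assms(1,2)] ts_def w_def
    using \<open>NC = (\<Sum>r<p. pcompose (Gp B0 B1 B2 p) [:of_nat r, 1:])\<close> by simp
  have hc: "poly T 0 = poly NC 0 + trace (matpow B0 p)"
    using hT w0 by simp
  have main: "T = w ^ 2 * [:trace (matpow B2 p):] - w * [:ts:] + w * [:trace (matpow B1 p):] + [:poly T 0:]"
  proof -
    have "T = smult (- ts) w + [:poly NC 0:] + ([:trace (matpow B0 p):] + smult (trace (matpow B1 p)) w
                       + smult (trace (matpow B2 p)) (w ^ 2))"
      using hT hNC by simp
    also have "\<dots> = w ^ 2 * [:trace (matpow B2 p):] - w * [:ts:] + w * [:trace (matpow B1 p):]
                     + ([:poly NC 0:] + [:trace (matpow B0 p):])"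
      by (simp add: algebra_simps)
    also have "[:poly NC 0:] + [:trace (matpow B0 p):] = [:poly T 0:]" using hc by simp
    finally show ?thesis .
  qed
  show ?thesis
    unfolding zw T0[symmetric] ts_def[symmetric] using main unfolding T_def z_def by simp
qed


end
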